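(* For any metric spaces $(X,d_X)$ and $(Y,d_Y)$, $$\tilde d_{\mathrm{GH}}(X,Y)\le d_{\mathrm{GH}}(X,Y)\le 2\,\tilde d_{\mathrm{GH}}(X,Y).$$
   Context: For (not necessarily continuous) maps $f:X\to Y$, $g:Y\to X$: $\mathrm{dis}(f)=\sup_{x,x'\in X}|d_X(x,x')-d_Y(f(x),f(x'))|$ (similarly $\mathrm{dis}(g)$), $\mathrm{codis}(f,g)=\sup_{x\in X,y\in Y}|d_X(x,g(y))-d_Y(y,f(x))|$, and $\widetilde{\mathrm{codis}}(f,g)=\max\{\sup_{x\in X}d_X(x,g(f(x))),\sup_{y\in Y}d_Y(y,f(g(y)))\}$. The Gromov–Hausdorff distance is $d_{\mathrm{GH}}(X,Y)=\tfrac12\inf_{f,g}\max\{\mathrm{dis}(f),\mathrm{dis}(g),\mathrm{codis}(f,g)\}$, and the altered Gromov–Hausdorff distance is $\tilde d_{\mathrm{GH}}(X,Y)=\tfrac12\inf_{f,g}\max\{\mathrm{dis}(f),\mathrm{dis}(g),\widetilde{\mathrm{codis}}(f,g)\}$, both infima over all maps $f:X\to Y$, $g:Y\to X$. *)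

theory Defs
  imports "HOL-Analysis.Analysis" "HOL-Library.Extended_Nonnegative_Real"
begin

text \<open>Suprema are taken in [0, \<infinity>] (ennreal), so unbounded spaces give value \<infinity>.\<close>

definition dis :: "'a set \<Rightarrow> ('a \<Rightarrow> 'a \<Rightarrow> real) \<Rightarrow> ('b \<Rightarrow> 'b \<Rightarrow> real) \<Rightarrow> ('a \<Rightarrow> 'b) \<Rightarrow> ennreal" where
  "dis X dX dY f = (SUP p \<in> X \<times> X. ennreal \<bar>dX (fst p) (snd p) - dY (f (fst p)) (f (snd p))\<bar>)"

definition codis :: "'a set \<Rightarrow> ('a \<Rightarrow> 'a \<Rightarrow> real) \<Rightarrow> 'b set \<Rightarrow> ('b \<Rightarrow> 'b \<Rightarrow> real)
    \<Rightarrow> ('a \<Rightarrow> 'b) \<Rightarrow> ('b \<Rightarrow> 'a) \<Rightarrow> ennreal" where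
  "codis X dX Y dY f g = (SUP p \<in> X \<times> Y. ennreal \<bar>dX (fst p) (g (snd p)) - dY (snd p) (f (fst p))\<bar>)"

definition codis_alt :: "'a set \<Rightarrow> ('a \<Rightarrow> 'a \<Rightarrow> real) \<Rightarrow> 'b set \<Rightarrow> ('b \<Rightarrow> 'b \<Rightarrow> real)
    \<Rightarrow> ('a \<Rightarrow> 'b) \<Rightarrow> ('b \<Rightarrow> 'a) \<Rightarrow> ennreal" where
  "codis_alt X dX Y dY f g = max (SUP x \<in> X. ennreal (dX x (g (f x))))
                                 (SUP y \<in> Y. ennreal (dY y (f (g y))))"

definition GH_dist :: "'a set \<Rightarrow> ('a \<Rightarrow> 'a \<Rightarrow> real) \<Rightarrow> 'b set \<Rightarrow> ('b \<Rightarrow> 'b \<Rightarrow> real) \<Rightarrow> ennreal" where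
  "GH_dist X dX Y dY = (INF fg \<in> {(f, g). f \<in> X \<rightarrow> Y \<and> g \<in> Y \<rightarrow> X}.
      max (max (dis X dX dY (fst fg)) (dis Y dY dX (snd fg))) (codis X dX Y dY (fst fg) (snd fg))) / 2"

definition GH_dist_alt :: "'a set \<Rightarrow> ('a \<Rightarrow> 'a \<Rightarrow> real) \<Rightarrow> 'b set \<Rightarrow> ('b \<Rightarrow> 'b \<Rightarrow> real) \<Rightarrow> ennreal" where
  "GH_dist_alt X dX Y dY = (INF fg \<in> {(f, g). f \<in> X \<rightarrow> Y \<and> g \<in> Y \<rightarrow> X}.
      max (max (dis X dX dY (fst fg)) (dis Y dY dX (snd fg))) (codis_alt X dX Y dY (fst fg) (snd fg))) / 2"

end

theory Submission
  imports Defs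
begin

lemma codis_alt_le:
  assumes MX: "Metric_space X dX" and MY: "Metric_space Y dY"
    and f: "f \<in> X \<rightarrow> Y" and g: "g \<in> Y \<rightarrow> X"
  shows "codis_alt X dX Y dY f g \<le> codis X dX Y dY f g"
  unfolding codis_alt_def
proof (rule max.boundedI)
  show "(SUP x\<in>X. ennreal (dX x (g (f x)))) \<le> codis X dX Y dY f g"
  proof (rule SUP_least)
    fix x assume x: "x \<in> X"
    have "ennreal (dX x (g (f x))) = ennreal \<bar>dX (fst (x, f x)) (g (snd (x, f x))) - dY (snd (x, f x)) (f (fst (x, f x)))\<bar>"
      using x f MX MY Metric_space.mdist_zero[OF MY funcset_mem[OF f x]] Metric_space.nonneg[OF MX] by auto
    also have "\<dots> \<le> codis X dX Y dY f g" unfolding codis_def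
      by (rule SUP_upper) (use x f in auto)
    finally show "ennreal (dX x (g (f x))) \<le> codis X dX Y dY f g" .
  qed
  show "(SUP y\<in>Y. ennreal (dY y (f (g y)))) \<le> codis X dX Y dY f g"
  proof (rule SUP_least)
    fix y assume y: "y \<in> Y"
    have "ennreal (dY y (f (g y))) = ennreal \<bar>dX (fst (g y, y)) (g (snd (g y, y))) - dY (snd (g y, y)) (f (fst (g y, y)))\<bar>"
      using y g MX MY Metric_space.mdist_zero[OF MX funcset_mem[OF g y]] Metric_space.nonneg[OF MY] by auto
    also have "\<dots> \<le> codis X dX Y dY f g" unfolding codis_def
      by (rule SUP_upper) (use y g in auto)
    finally show "ennreal (dY y (f (g y))) \<le> codis X dX Y dY f g" .
  qed
qed

lemma codis_le:
  assumes MX: "Metric_space X dX" and MY: "Metric_space Y dY"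
    and f: "f \<in> X \<rightarrow> Y" and g: "g \<in> Y \<rightarrow> X"
  shows "codis X dX Y dY f g \<le> 2 * max (max (dis X dX dY f) (dis Y dY dX g)) (codis_alt X dX Y dY f g)"
    (is "_ \<le> 2 * ?m")
  unfolding codis_def
proof (rule SUP_least)
  fix p assume p: "p \<in> X \<times> Y"
  obtain x y where xy: "p = (x, y)" "x \<in> X" "y \<in> Y" using p by auto
  have fx: "f x \<in> Y" and gy: "g y \<in> X" and gfx: "g (f x) \<in> X" and fgy: "f (g y) \<in> Y"
    using f g xy by auto
  have dfx: "ennreal \<bar>dX (g y) x - dY (f (g y)) (f x)\<bar> \<le> ?m"
  proof -
    have "ennreal \<bar>dX (g y) x - dY (f (g y)) (f x)\<bar> \<le> dis X dX dY f"
      unfolding dis_def by (rule SUP_upper2[of "(g y, x)"]) (use gy xy in auto)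
    then show ?thesis by (meson max.cobounded1 order_trans)
  qed
  have dgy: "ennreal \<bar>dY (f x) y - dX (g (f x)) (g y)\<bar> \<le> ?m"
  proof -
    have "ennreal \<bar>dY (f x) y - dX (g (f x)) (g y)\<bar> \<le> dis Y dY dX g"
      unfolding dis_def by (rule SUP_upper2[of "(f x, y)"]) (use fx xy in auto)
    then show ?thesis by (meson max.cobounded1 max.cobounded2 order_trans)
  qed
  have c1: "ennreal (dX x (g (f x))) \<le> ?m"
  proof -
    have "ennreal (dX x (g (f x))) \<le> codis_alt X dX Y dY f g"
      unfolding codis_alt_def by (rule order_trans[OF SUP_upper max.cobounded1]) (use xy in auto)
    then show ?thesis by (meson max.cobounded2 order_trans)
  qed
  have c2: "ennreal (dY y (f (g y))) \<le> ?m"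
  proof -
    have "ennreal (dY y (f (g y))) \<le> codis_alt X dX Y dY f g"
      unfolding codis_alt_def by (rule order_trans[OF SUP_upper max.cobounded2]) (use xy in auto)
    then show ?thesis by (meson max.cobounded2 order_trans)
  qed
  have t1: "dY y (f x) \<le> dY y (f (g y)) + dY (f (g y)) (f x)"
    using MY xy fx fgy by (meson Metric_space.triangle)
  have t2: "dX x (g y) \<le> dX x (g (f x)) + dX (g (f x)) (g y)"
    using MX xy gy gfx by (meson Metric_space.triangle)
  have cX: "dX (g y) x = dX x (g y)" using MX by (meson Metric_space.commute)
  have cY: "dY (f x) y = dY y (f x)" using MY by (meson Metric_space.commute)
  have nX: "\<And>a b. 0 \<le> dX a b" using MX by (meson Metric_space.nonneg)
  have nY: "\<And>a b. 0 \<le> dY a b" using MY by (meson Metric_space.nonneg)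
  show "ennreal \<bar>dX (fst p) (g (snd p)) - dY (snd p) (f (fst p))\<bar> \<le> 2 * ?m"
  proof (cases "dX x (g y) \<le> dY y (f x)")
    case True
    have "\<bar>dX x (g y) - dY y (f x)\<bar> \<le> dY y (f (g y)) + \<bar>dX (g y) x - dY (f (g y)) (f x)\<bar>"
      using True t1 cX by linarith
    hence "ennreal \<bar>dX x (g y) - dY y (f x)\<bar> \<le> ennreal (dY y (f (g y))) + ennreal \<bar>dX (g y) x - dY (f (g y)) (f x)\<bar>"
      by (metis abs_ge_zero ennreal_leI ennreal_plus nY)
    also have "\<dots> \<le> ?m + ?m" using c2 dfx by (rule add_mono)
    finally show ?thesis using xy by (simp add: mult_2)
  next
    case False
    have "\<bar>dX x (g y) - dY y (f x)\<bar> \<le> dX x (g (f x)) + \<bar>dY (f x) y - dX (g (f x)) (g y)\<bar>"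
      using False t2 cY by linarith
    hence "ennreal \<bar>dX x (g y) - dY y (f x)\<bar> \<le> ennreal (dX x (g (f x))) + ennreal \<bar>dY (f x) y - dX (g (f x)) (g y)\<bar>"
      by (metis abs_ge_zero ennreal_leI ennreal_plus nX)
    also have "\<dots> \<le> ?m + ?m" using c1 dgy by (rule add_mono)
    finally show ?thesis using xy by (simp add: mult_2)
  qed
qed

theorem proposition5p10:
  fixes X :: "'a set" and dX :: "'a \<Rightarrow> 'a \<Rightarrow> real"
    and Y :: "'b set" and dY :: "'b \<Rightarrow> 'b \<Rightarrow> real"
  assumes "Metric_space X dX" and "Metric_space Y dY"
  shows "GH_dist_alt X dX Y dY \<le> GH_dist X dX Y dY \<and> GH_dist X dX Y dY \<le> 2 * GH_dist_alt X dX Y dY"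
proof
  let ?S = "{(f, g). f \<in> X \<rightarrow> Y \<and> g \<in> Y \<rightarrow> X}"
  let ?M = "\<lambda>fg. max (max (dis X dX dY (fst fg)) (dis Y dY dX (snd fg))) (codis X dX Y dY (fst fg) (snd fg))"
  let ?M' = "\<lambda>fg. max (max (dis X dX dY (fst fg)) (dis Y dY dX (snd fg))) (codis_alt X dX Y dY (fst fg) (snd fg))"
  have le1: "?M' fg \<le> ?M fg" if "fg \<in> ?S" for fg
    using that by (intro max.mono[OF order_refl] codis_alt_le[OF assms]) auto
  have le2: "?M fg \<le> 2 * ?M' fg" if "fg \<in> ?S" for fg
  proof -
    have "max (dis X dX dY (fst fg)) (dis Y dY dX (snd fg)) \<le> 2 * ?M' fg"
      by (metis max.cobounded1 order_trans mult_2 add_increasing2 zero_le le_iff_add)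
    moreover have "codis X dX Y dY (fst fg) (snd fg) \<le> 2 * ?M' fg"
      using that codis_le[OF assms, of "fst fg" "snd fg"] by auto
    ultimately show ?thesis by simp
  qed
  have "(INF fg\<in>?S. ?M' fg) \<le> (INF fg\<in>?S. ?M fg)"
    by (rule INF_mono) (use le1 in blast)
  then show "GH_dist_alt X dX Y dY \<le> GH_dist X dX Y dY"
    unfolding GH_dist_alt_def GH_dist_def by (rule divide_right_mono_ennreal)
  have "(INF fg\<in>?S. ?M fg) / 2 \<le> (INF fg\<in>?S. ?M' fg)"
  proof (rule INF_greatest)
    fix fg assume fg: "fg \<in> ?S"
    have "(INF fg\<in>?S. ?M fg) / 2 \<le> ?M fg / 2"
      by (rule divide_right_mono_ennreal, rule INF_lower[OF fg])
    also have "\<dots> \<le> 2 * ?M' fg / 2"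
      by (rule divide_right_mono_ennreal, rule le2[OF fg])
    also have "\<dots> = ?M' fg"
      by (subst mult.commute, rule ennreal_mult_divide_eq) auto
    finally show "(INF fg\<in>?S. ?M fg) / 2 \<le> ?M' fg" .
  qed
  also have "\<dots> = 2 * ((INF fg\<in>?S. ?M' fg) / 2)"
    by (simp add: ennreal_times_divide, subst mult.commute, rule ennreal_mult_divide_eq[symmetric]) auto
  finally show "GH_dist X dX Y dY \<le> 2 * GH_dist_alt X dX Y dY"
    unfolding GH_dist_alt_def GH_dist_def .
qed

end
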